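(* Let $(R,\mathfrak m)$ be a Noetherian local ring and let $T$ be an indeterminate. Then $\operatorname{gr}_{(\mathfrak m,T)}(R[T]) = \operatorname{gr}_{\mathfrak m}(R)[T]$. Moreover, via this identification, for any $T$-homogeneous ideal $I=\sum_{k\ge 0} I_k T^k$ of $R[T]$ (where each $I_k$ is an ideal of $R$), the initial ideal of $I$ with respect to $(\mathfrak m,T)$ is $\operatorname{in}_{(\mathfrak m,T)}(I)=\sum_{k\ge 0}\operatorname{in}_{\mathfrak m}(I_k)T^k$.
   Context: For a ring $A$ and ideals $J, I\subseteq A$, $\operatorname{gr}_J(A)=\bigoplus_{n\ge 0} J^n/J^{n+1}$ is the associated graded ring, and the initial (form) ideal of $I$ is $\operatorname{in}_J(I)=\bigoplus_{n\ge0} (I\cap J^n + J^{n+1})/J^{n+1}\subseteq \operatorname{gr}_J(A)$. *)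

theory Defs
  imports "HOL-Algebra.Algebra"
begin

primrec ideal_pow :: "('a, 'b) ring_scheme \<Rightarrow> 'a set \<Rightarrow> nat \<Rightarrow> 'a set" where
  "ideal_pow R I 0 = carrier R"
| "ideal_pow R I (Suc n) = ideal_prod R I (ideal_pow R I n)"

definition local_ring :: "('a, 'b) ring_scheme \<Rightarrow> 'a set \<Rightarrow> bool" where
  "local_ring R m \<longleftrightarrow> cring R \<and> maximalideal m R \<and> (\<forall>M. maximalideal M R \<longrightarrow> M = m)"

text \<open>An element of gr_J(A) is a finitely supported family g with g n a coset
  J^(n+1) + x, x in J^n, i.e. an element of J^n/J^(n+1).\<close>

definition gr_piece :: "('a, 'b) ring_scheme \<Rightarrow> 'a set \<Rightarrow> nat \<Rightarrow> 'a set set" where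
  "gr_piece A J n = (\<lambda>x. ideal_pow A J (Suc n) +>\<^bsub>A\<^esub> x) ` ideal_pow A J n"

definition gr_class :: "('a, 'b) ring_scheme \<Rightarrow> 'a set \<Rightarrow> nat \<Rightarrow> 'a \<Rightarrow> nat \<Rightarrow> 'a set" where
  "gr_class A J n x = (\<lambda>k. ideal_pow A J (Suc k) +>\<^bsub>A\<^esub> (if k = n then x else \<zero>\<^bsub>A\<^esub>))"

definition gr_rep :: "'a set \<Rightarrow> 'a" where
  "gr_rep S = (SOME x. x \<in> S)"

definition gr :: "('a, 'b) ring_scheme \<Rightarrow> 'a set \<Rightarrow> (nat \<Rightarrow> 'a set) ring" where
  "gr A J = \<lparr>
     carrier = {g. (\<forall>n. g n \<in> gr_piece A J n) \<and>
                   finite {n. g n \<noteq> ideal_pow A J (Suc n) +>\<^bsub>A\<^esub> \<zero>\<^bsub>A\<^esub>}},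
     monoid.mult = (\<lambda>g h n. ideal_pow A J (Suc n) +>\<^bsub>A\<^esub>
                (finsum A (\<lambda>i. gr_rep (g i) \<otimes>\<^bsub>A\<^esub> gr_rep (h (n - i))) {..n})),
     one = gr_class A J 0 \<one>\<^bsub>A\<^esub>,
     ring.zero = (\<lambda>n. ideal_pow A J (Suc n) +>\<^bsub>A\<^esub> \<zero>\<^bsub>A\<^esub>),
     add = (\<lambda>g h n. g n <+>\<^bsub>A\<^esub> h n) \<rparr>"

definition in_ideal :: "('a, 'b) ring_scheme \<Rightarrow> 'a set \<Rightarrow> 'a set \<Rightarrow> (nat \<Rightarrow> 'a set) set" where
  "in_ideal A J I = {g \<in> carrier (gr A J).
      \<forall>n. g n \<in> (\<lambda>x. ideal_pow A J (Suc n) +>\<^bsub>A\<^esub> x) ` (I \<inter> ideal_pow A J n)}"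

end

theory Submission
  imports Defs
begin


lemma (in ring) cos_eq:
  assumes "ideal I R" "x \<in> carrier R" "y \<in> carrier R"
  shows "(I +> x = I +> y) \<longleftrightarrow> x \<ominus> y \<in> I"
proof -
  interpret I: ideal I R by fact
  show ?thesis
  proof
    assume "I +> x = I +> y"
    then have "x \<in> I +> y" using I.a_rcos_self assms by metis
    then show "x \<ominus> y \<in> I" using I.a_rcos_module_minus[OF ring_axioms] assms by blast
  next
    assume "x \<ominus> y \<in> I"
    then have "x \<in> I +> y" using I.a_rcos_module_minus[OF ring_axioms] assms by blast
    then show "I +> x = I +> y" using I.a_repr_independence' assms by metis
  qed
qed

lemma (in ring) cos_rep:
  assumes "ideal I R" "ideal K R" "I \<subseteq> K" "x \<in> K"
  shows "gr_rep (I +> x) \<in> K \<and> I +> x = I +> gr_rep (I +> x) \<and> gr_rep (I +> x) \<ominus> x \<in> I"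
proof -
  interpret I: ideal I R by fact
  interpret K: ideal K R by fact
  have xc: "x \<in> carrier R" using assms K.Icarr by blast
  have "x \<in> I +> x" using I.a_rcos_self xc by blast
  then have r: "gr_rep (I +> x) \<in> I +> x" unfolding gr_rep_def by (rule someI)
  then obtain i where i: "i \<in> I" "gr_rep (I +> x) = i \<oplus> x"
    unfolding a_r_coset_def r_coset_def by auto
  have ic: "i \<in> carrier R" using i I.Icarr by blast
  have "gr_rep (I +> x) \<in> K" using i assms(3) assms(4) K.a_closed by auto
  moreover have "gr_rep (I +> x) \<ominus> x \<in> I" using i ic xc
    by (simp add: a_minus_def add.m_assoc r_neg r_zero)
  moreover have "gr_rep (I +> x) \<in> carrier R" using i ic xc by simp
  ultimately show ?thesis using cos_eq[OF assms(1)] xc by (metis minus_minus a_minus_def minus_add I.a_inv_closed a_comm)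
qed


lemma (in ring) finsum_in_ideal:
  assumes "ideal I R" "finite A" "\<And>i. i \<in> A \<Longrightarrow> F i \<in> I"
  shows "finsum R F A \<in> I"
  using assms(2,3)
proof (induct A rule: finite_induct)
  case empty
  then show ?case using assms(1) by (simp add: additive_subgroup.zero_closed ideal.axioms(1))
next
  case (insert x A)
  have c: "F \<in> insert x A \<rightarrow> carrier R" using insert(4) ideal.Icarr[OF assms(1)] by blast
  then show ?case using insert
    by (simp add: finsum_insert additive_subgroup.a_closed ideal.axioms(1) assms(1) Pi_def)
qed

lemma (in ring) cls_add:
  assumes "ideal I R" "x \<in> carrier R" "y \<in> carrier R"
  shows "(I +> x) <+> (I +> y) = I +> (x \<oplus> y)"
proof -
  interpret I: ideal I R by fact
  show ?thesis using I.a_rcos_sum assms by blast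
qed

lemma (in ring) cls_sum:
  assumes "ideal I R" "finite A" "F \<in> A \<rightarrow> carrier R" "H \<in> A \<rightarrow> carrier R"
    "\<And>i. i \<in> A \<Longrightarrow> I +> F i = I +> H i"
  shows "I +> finsum R F A = I +> finsum R H A"
  using assms(2-5)
proof (induct A rule: finite_induct)
  case empty
  then show ?case by simp
next
  case (insert x A)
  have cF: "F x \<in> carrier R" "finsum R F A \<in> carrier R" using insert by (auto intro: finsum_closed)
  have cH: "H x \<in> carrier R" "finsum R H A \<in> carrier R" using insert by (auto intro: finsum_closed)
  have "I +> finsum R F (insert x A) = (I +> F x) <+> (I +> finsum R F A)"
    using insert cF finsum_insert[OF insert(1) insert(2), of F] cls_add[OF assms(1) cF] by simp
  also have "\<dots> = (I +> H x) <+> (I +> finsum R H A)" using insert by simp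
  also have "\<dots> = I +> finsum R H (insert x A)"
    using insert cH finsum_insert[OF insert(1) insert(2), of H] cls_add[OF assms(1) cH] by simp
  finally show ?case .
qed

lemma (in ring) cls_extra:
  assumes "ideal I R" "finite B" "A \<subseteq> B" "F \<in> B \<rightarrow> carrier R"
    "\<And>i. i \<in> B - A \<Longrightarrow> F i \<in> I"
  shows "I +> finsum R F B = I +> finsum R F A"
proof -
  have fa: "finite A" using assms finite_subset by blast
  have B: "B = A \<union> (B - A)" using assms by blast
  have "finsum R F B = finsum R F A \<oplus> finsum R F (B - A)"
  proof -
    have "finsum R F (A \<union> (B - A)) = finsum R F A \<oplus> finsum R F (B - A)"
      by (rule finsum_Un_disjoint) (use fa assms in auto)
    then show ?thesis using B by simp
  qed
  moreover have "finsum R F (B - A) \<in> I" using finsum_in_ideal[OF assms(1)] assms by blast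
  moreover have c1: "finsum R F A \<in> carrier R" using assms fa by (intro finsum_closed) auto
  moreover have c2: "finsum R F (B - A) \<in> carrier R" using assms by (intro finsum_closed) auto
  moreover have "finsum R F A \<oplus> finsum R F (B - A) \<ominus> finsum R F A = finsum R F (B - A)"
    using c1 c2 by algebra
  ultimately show ?thesis using cos_eq[OF assms(1)] c1 c2 by simp
qed

lemma (in ring) cls_zero:
  assumes "ideal I R" "x \<in> carrier R"
  shows "(I +> x = I +> \<zero>) \<longleftrightarrow> x \<in> I"
  using cos_eq[OF assms(1) assms(2) zero_closed] assms by (simp add: a_minus_def)

lemma (in ring) cls_mem:
  assumes "ideal I R" "x \<in> carrier R"
  shows "x \<in> I +> x"
proof -
  interpret I: ideal I R by fact
  show ?thesis using I.a_rcos_self assms(2) by blast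
qed


locale grctx = UP_cring R P for R (structure) and P (structure) +
  fixes m assumes m_ideal: "ideal m R"
begin

abbreviation M where "M n \<equiv> ideal_pow R m n"

lemma M_ideal: "ideal (M n) R"
  by (induct n) (auto simp: R.oneideal R.ideal_prod_is_ideal m_ideal)

lemma M_carr: "M n \<subseteq> carrier R"
  using ideal.Icarr[OF M_ideal] by blast

lemma M_Suc_sub: "M (Suc n) \<subseteq> M n"
  using R.ideal_prod_inter[OF m_ideal M_ideal[of n]] by simp

lemma M_mono: "a \<le> b \<Longrightarrow> M b \<subseteq> M a"
proof (induct b rule: dec_induct)
  case (step n)
  then show ?case using M_Suc_sub[of n] by blast
qed simp

lemma M_mult: "x \<in> M a \<Longrightarrow> y \<in> M b \<Longrightarrow> x \<otimes> y \<in> M (a + b)"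
proof (induct a arbitrary: x)
  case 0
  have "x \<in> carrier R" using 0 by simp
  then show ?case using ideal.I_l_closed[OF M_ideal[of b] 0(2)] by simp
next
  case (Suc a)
  have yc: "y \<in> carrier R" using Suc(3) M_carr by blast
  from Suc(2) have "x \<in> ideal_prod R m (M a)" by simp
  then show ?case
  proof (induct x rule: ideal_prod.induct)
    case (prod i j)
    have ic: "i \<in> carrier R" using ideal.Icarr[OF m_ideal prod(1)] .
    have jc: "j \<in> carrier R" using prod(2) M_carr by blast
    have e: "(i \<otimes> j) \<otimes> y = i \<otimes> (j \<otimes> y)" using R.m_assoc[OF ic jc yc] .
    have "j \<otimes> y \<in> M (a + b)" using Suc(1)[OF prod(2) Suc(3)] .
    then have "i \<otimes> (j \<otimes> y) \<in> ideal_prod R m (M (a + b))" by (rule ideal_prod.prod[OF prod(1)])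
    then show ?case using e by simp
  next
    case (sum s1 s2)
    have c: "ideal_prod R m (M a) \<subseteq> carrier R" using R.ideal_prod_in_carrier[OF m_ideal M_ideal[of a]] .
    have "s1 \<in> carrier R" "s2 \<in> carrier R" using sum(1) sum(3) c by auto
    then have e: "(s1 \<oplus> s2) \<otimes> y = s1 \<otimes> y \<oplus> s2 \<otimes> y" using yc R.l_distr by simp
    have "s1 \<otimes> y \<oplus> s2 \<otimes> y \<in> ideal_prod R m (M (a + b))"
      using ideal_prod.sum[of "s1 \<otimes> y" R m "M (a+b)" "s2 \<otimes> y"] sum(2) sum(4) by simp
    then show ?case using e by simp
  qed
qed

lemma M_mult': "x \<in> M a \<Longrightarrow> y \<in> M b \<Longrightarrow> c \<le> a + b \<Longrightarrow> x \<otimes> y \<in> M c"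
  using M_mult M_mono by blast

lemma M1: "M 1 = m"
proof
  show "M 1 \<subseteq> m" using R.ideal_prod_inter[OF m_ideal M_ideal[of 0]] by auto
  show "m \<subseteq> M 1"
  proof
    fix r assume r: "r \<in> m"
    then have "r \<otimes> \<one> \<in> M 1" using ideal_prod.prod[of r m \<one> "carrier R" R] by simp
    moreover have "r \<in> carrier R" using ideal.Icarr[OF m_ideal r] .
    ultimately show "r \<in> M 1" by simp
  qed
qed

lemma M_zero: "\<zero> \<in> M n"
  using additive_subgroup.zero_closed[OF ideal.axioms(1)[OF M_ideal]] .

end


context grctx
begin

definition Jn where "Jn n = {f \<in> carrier P. \<forall>k. up_ring.coeff P f k \<in> M (n - k)}"

abbreviation TT where "TT \<equiv> up_ring.monom P \<one> 1"
abbreviation Jgen where "Jgen \<equiv> Idl\<^bsub>P\<^esub> (insert TT ((\<lambda>r. up_ring.monom P r 0) ` m))"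

lemma Jn_carr: "Jn n \<subseteq> carrier P" unfolding Jn_def by blast

lemma Jn_0: "Jn 0 = carrier P"
  unfolding Jn_def by auto

lemma Jn_mult:
  assumes f: "f \<in> Jn a" and g: "g \<in> Jn b"
  shows "f \<otimes>\<^bsub>P\<^esub> g \<in> Jn (a + b)"
proof -
  have fc: "f \<in> carrier P" and gc: "g \<in> carrier P" using f g unfolding Jn_def by auto
  have "up_ring.coeff P (f \<otimes>\<^bsub>P\<^esub> g) k \<in> M (a + b - k)" for k
  proof -
    have "(\<Oplus>i \<in> {..k}. up_ring.coeff P f i \<otimes> up_ring.coeff P g (k - i)) \<in> M (a + b - k)"
    proof (rule R.finsum_in_ideal[OF M_ideal])
      fix i assume i: "i \<in> {..k}"
      have "up_ring.coeff P f i \<in> M (a - i)" "up_ring.coeff P g (k - i) \<in> M (b - (k - i))"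
        using f g unfolding Jn_def by auto
      moreover have "a + b - k \<le> (a - i) + (b - (k - i))" using i by auto
      ultimately show "up_ring.coeff P f i \<otimes> up_ring.coeff P g (k - i) \<in> M (a + b - k)"
        using M_mult' by blast
    qed simp
    then show ?thesis using coeff_mult[OF fc gc] by simp
  qed
  then show ?thesis unfolding Jn_def using fc gc by simp
qed

lemma Jn_add:
  assumes f: "f \<in> Jn a" and g: "g \<in> Jn a"
  shows "f \<oplus>\<^bsub>P\<^esub> g \<in> Jn a"
proof -
  have fc: "f \<in> carrier P" and gc: "g \<in> carrier P" using f g unfolding Jn_def by auto
  have "up_ring.coeff P f k \<oplus> up_ring.coeff P g k \<in> M (a - k)" for k
    using f g unfolding Jn_def
    using additive_subgroup.a_closed[OF ideal.axioms(1)[OF M_ideal]] by blast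
  then show ?thesis using fc gc unfolding Jn_def by simp
qed

lemma Jn_neg:
  assumes f: "f \<in> Jn a"
  shows "\<ominus>\<^bsub>P\<^esub> f \<in> Jn a"
proof -
  have fc: "f \<in> carrier P" using f unfolding Jn_def by auto
  have "\<ominus> up_ring.coeff P f k \<in> M (a - k)" for k
    using f unfolding Jn_def
    using additive_subgroup.a_inv_closed[OF ideal.axioms(1)[OF M_ideal]] by blast
  then show ?thesis using fc unfolding Jn_def by simp
qed

lemma Jn_ideal: "ideal (Jn n) P"
proof (rule idealI[OF UP_ring])
  show "subgroup (Jn n) (add_monoid P)"
  proof (rule P.add.subgroupI, goal_cases)
    case 1 show ?case using Jn_carr by simp
  next
    case 2
    have "\<zero>\<^bsub>P\<^esub> \<in> Jn n" unfolding Jn_def using M_zero by simp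
    then show ?case by blast
  next
    case (3 a)
    then show ?case using Jn_neg[OF 3] by (simp add: a_inv_def)
  next
    case (4 a b)
    then show ?case using Jn_add[OF 4] by simp
  qed
  show "x \<otimes>\<^bsub>P\<^esub> a \<in> Jn n" if "a \<in> Jn n" "x \<in> carrier P" for a x
    using Jn_mult[of x 0 a n] that Jn_0 by simp
  show "a \<otimes>\<^bsub>P\<^esub> x \<in> Jn n" if "a \<in> Jn n" "x \<in> carrier P" for a x
    using Jn_mult[of a n x 0] that Jn_0 by simp
qed

lemma poly_in_ideal:
  assumes K: "ideal K P" and f: "f \<in> carrier P" and h: "\<And>k. up_ring.monom P (up_ring.coeff P f k) k \<in> K"
  shows "f \<in> K"
proof -
  have "(\<Oplus>\<^bsub>P\<^esub> i \<in> {..deg R f}. up_ring.monom P (up_ring.coeff P f i) i) \<in> K"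
  proof (rule P.finsum_in_ideal[OF K])
    show "finite {..deg R f}" by simp
    fix i show "up_ring.monom P (up_ring.coeff P f i) i \<in> K" by (rule h)
  qed
  then show ?thesis using up_repr[OF f] by simp
qed

lemma monom_Suc: "a \<in> carrier R \<Longrightarrow> up_ring.monom P a (Suc k) = TT \<otimes>\<^bsub>P\<^esub> up_ring.monom P a k"
  using monom_mult[of \<one> a 1 k] by simp

lemma monom_Jn: "a \<in> M (n - k) \<Longrightarrow> up_ring.monom P a k \<in> Jn n"
proof -
  assume a: "a \<in> M (n - k)"
  have ac: "a \<in> carrier R" using a M_carr by blast
  have "up_ring.coeff P (up_ring.monom P a k) j \<in> M (n - j)" for j

  proof (cases "k = j")
    case True
    then show ?thesis using coeff_monom[OF ac, of k j] a by simp
  next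
    case False
    then show ?thesis using coeff_monom[OF ac, of k j] M_zero by simp
  qed
  then show ?thesis unfolding Jn_def using monom_closed[OF ac] by blast
qed

lemma TT_Jn1: "TT \<in> Jn 1"
  by (rule monom_Jn) simp

lemma Jgen_eq: "Jgen = Jn 1"
proof
  have gs: "insert TT ((\<lambda>r. up_ring.monom P r 0) ` m) \<subseteq> carrier P"
    using ideal.Icarr[OF m_ideal] monom_closed by auto
  show "Jgen \<subseteq> Jn 1"
  proof (rule P.genideal_minimal[OF Jn_ideal])
    show "insert TT ((\<lambda>r. up_ring.monom P r 0) ` m) \<subseteq> Jn 1"
    proof -
      have "up_ring.monom P r 0 \<in> Jn 1" if "r \<in> m" for r
        by (rule monom_Jn) (use that M1 in simp)
      then show ?thesis using TT_Jn1 by blast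
    qed
  qed
  show "Jn 1 \<subseteq> Jgen"
  proof
    fix f assume f: "f \<in> Jn 1"
    have K: "ideal Jgen P" using P.genideal_ideal[OF gs] .
    have XJ: "TT \<in> Jgen" using P.genideal_self[OF gs] by blast
    show "f \<in> Jgen"
    proof (rule poly_in_ideal[OF K])
      show fc: "f \<in> carrier P" using f Jn_carr by blast
      fix k
      show "up_ring.monom P (up_ring.coeff P f k) k \<in> Jgen"
      proof (cases k)
        case 0
        have "up_ring.coeff P f 0 \<in> M (1 - 0)" using f unfolding Jn_def by blast
        then have "up_ring.coeff P f k \<in> m" using M1 0 by simp
        then show ?thesis using P.genideal_self[OF gs] 0 by blast
      next
        case (Suc k')
        have cc: "up_ring.coeff P f k \<in> carrier R" using coeff_closed[OF fc] .
        have e: "up_ring.monom P (up_ring.coeff P f k) k = TT \<otimes>\<^bsub>P\<^esub> up_ring.monom P (up_ring.coeff P f k) k'"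
          unfolding Suc by (rule monom_Suc[OF cc[unfolded Suc]])
        have "TT \<otimes>\<^bsub>P\<^esub> up_ring.monom P (up_ring.coeff P f k) k' \<in> Jgen"
          by (rule ideal.I_r_closed[OF K XJ monom_closed[OF cc]])
        then show ?thesis using e by simp
      qed
    qed
  qed
qed

end


context grctx
begin

lemma gens_carr: "insert TT ((\<lambda>r. up_ring.monom P r 0) ` m) \<subseteq> carrier P"
  using ideal.Icarr[OF m_ideal] monom_closed by auto

lemma Jgen_ideal: "ideal Jgen P"
  using P.genideal_ideal[OF gens_carr] .

lemma Jn_Suc: "Jn (Suc n) = ideal_prod P Jgen (Jn n)"
proof
  have K: "ideal (ideal_prod P Jgen (Jn n)) P"
    using P.ideal_prod_is_ideal[OF Jgen_ideal Jn_ideal] .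
  have TTJ: "TT \<in> Jgen" using P.genideal_self[OF gens_carr] by blast
  show "Jn (Suc n) \<subseteq> ideal_prod P Jgen (Jn n)"
  proof
    fix f assume f: "f \<in> Jn (Suc n)"
    have fc: "f \<in> carrier P" using f Jn_carr by blast
    show "f \<in> ideal_prod P Jgen (Jn n)"
    proof (rule poly_in_ideal[OF K fc])
      fix k
      have cc: "up_ring.coeff P f k \<in> carrier R" using coeff_closed[OF fc] .
      show "up_ring.monom P (up_ring.coeff P f k) k \<in> ideal_prod P Jgen (Jn n)"
      proof (cases k)
        case 0
        have "up_ring.coeff P f 0 \<in> M (Suc n - 0)" using f unfolding Jn_def by blast
        then have "up_ring.coeff P f 0 \<in> ideal_prod R m (M n)" by simp
        then have "up_ring.monom P (up_ring.coeff P f 0) 0 \<in> ideal_prod P Jgen (Jn n)"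
        proof (induct rule: ideal_prod.induct)
          case (prod i j)
          have ic: "i \<in> carrier R" using ideal.Icarr[OF m_ideal prod(1)] .
          have jc: "j \<in> carrier R" using prod(2) M_carr by blast
          have e: "up_ring.monom P (i \<otimes> j) (0 + 0) = up_ring.monom P i 0 \<otimes>\<^bsub>P\<^esub> up_ring.monom P j 0"
            by (rule monom_mult[OF ic jc])
          have i1: "up_ring.monom P i 0 \<in> Jgen" using P.genideal_self[OF gens_carr] prod(1) by blast
          have j1: "up_ring.monom P j 0 \<in> Jn n" by (rule monom_Jn) (use prod(2) in simp)
          have "up_ring.monom P i 0 \<otimes>\<^bsub>P\<^esub> up_ring.monom P j 0 \<in> ideal_prod P Jgen (Jn n)"
            by (rule ideal_prod.prod[OF i1 j1])
          then show ?case using e by simp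
        next
          case (sum s1 s2)
          have c: "ideal_prod R m (M n) \<subseteq> carrier R" using R.ideal_prod_in_carrier[OF m_ideal M_ideal[of n]] .
          have s1c: "s1 \<in> carrier R" and s2c: "s2 \<in> carrier R" using sum(1) sum(3) c by auto
          have e: "up_ring.monom P (s1 \<oplus> s2) 0 = up_ring.monom P s1 0 \<oplus>\<^bsub>P\<^esub> up_ring.monom P s2 0"
            using monom_add[OF s1c s2c] by simp
          have "up_ring.monom P s1 0 \<oplus>\<^bsub>P\<^esub> up_ring.monom P s2 0 \<in> ideal_prod P Jgen (Jn n)"
            by (rule ideal_prod.sum[OF sum(2) sum(4)])
          then show ?case using e by simp
        qed
        then show ?thesis using 0 by simp
      next
        case (Suc k')
        have e: "up_ring.monom P (up_ring.coeff P f k) k = TT \<otimes>\<^bsub>P\<^esub> up_ring.monom P (up_ring.coeff P f k) k'"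
          unfolding Suc by (rule monom_Suc[OF cc[unfolded Suc]])
        have "up_ring.coeff P f k \<in> M (Suc n - k)" using f unfolding Jn_def by blast
        then have j1: "up_ring.monom P (up_ring.coeff P f k) k' \<in> Jn n"
          by (intro monom_Jn) (simp add: Suc)
        have "TT \<otimes>\<^bsub>P\<^esub> up_ring.monom P (up_ring.coeff P f k) k' \<in> ideal_prod P Jgen (Jn n)"
          by (rule ideal_prod.prod[OF TTJ j1])
        then show ?thesis using e by simp
      qed
    qed
  qed
  show "ideal_prod P Jgen (Jn n) \<subseteq> Jn (Suc n)"
  proof
    fix x assume "x \<in> ideal_prod P Jgen (Jn n)"
    then show "x \<in> Jn (Suc n)"
    proof (induct rule: ideal_prod.induct)
      case (prod i j)
      then show ?case using Jn_mult[of i 1 j n] Jgen_eq by simp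
    next
      case (sum s1 s2)
      then show ?case using Jn_add by blast
    qed
  qed
qed

lemma pow_eq: "ideal_pow P Jgen n = Jn n"
  by (induct n) (simp_all add: Jn_0 Jn_Suc)

end


locale grJ = ring R for R (structure) + fixes J assumes J_ideal: "ideal J R"
begin

abbreviation Q where "Q n \<equiv> ideal_pow R J n"
abbreviation cl where "cl n x \<equiv> Q (Suc n) +> x"

lemma Q_ideal: "ideal (Q n) R"
  by (induct n) (auto simp: oneideal ideal_prod_is_ideal J_ideal)

lemma Q_carr: "Q n \<subseteq> carrier R"
  using ideal.Icarr[OF Q_ideal] by blast

lemma Q_Suc_sub: "Q (Suc n) \<subseteq> Q n"
  using ideal_prod_inter[OF J_ideal Q_ideal[of n]] by simp

lemma Q_mono: "a \<le> b \<Longrightarrow> Q b \<subseteq> Q a"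
proof (induct b rule: dec_induct)
  case (step n)
  then show ?case using Q_Suc_sub[of n] by blast
qed simp

lemma Q_mult: "x \<in> Q a \<Longrightarrow> y \<in> Q b \<Longrightarrow> x \<otimes> y \<in> Q (a + b)"
proof (induct a arbitrary: x)
  case 0
  have "x \<in> carrier R" using 0 by simp
  then show ?case using ideal.I_l_closed[OF Q_ideal[of b] 0(2)] by simp
next
  case (Suc a)
  have yc: "y \<in> carrier R" using Suc(3) Q_carr by blast
  from Suc(2) have "x \<in> ideal_prod R J (Q a)" by simp
  then show ?case
  proof (induct x rule: ideal_prod.induct)
    case (prod i j)
    have ic: "i \<in> carrier R" using ideal.Icarr[OF J_ideal prod(1)] .
    have jc: "j \<in> carrier R" using prod(2) Q_carr by blast
    have e: "(i \<otimes> j) \<otimes> y = i \<otimes> (j \<otimes> y)" using m_assoc[OF ic jc yc] .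
    have "j \<otimes> y \<in> Q (a + b)" using Suc(1)[OF prod(2) Suc(3)] .
    then have "i \<otimes> (j \<otimes> y) \<in> ideal_prod R J (Q (a + b))" by (rule ideal_prod.prod[OF prod(1)])
    then show ?case using e by simp
  next
    case (sum s1 s2)
    have c: "ideal_prod R J (Q a) \<subseteq> carrier R" using ideal_prod_in_carrier[OF J_ideal Q_ideal[of a]] .
    have "s1 \<in> carrier R" "s2 \<in> carrier R" using sum(1) sum(3) c by auto
    then have e: "(s1 \<oplus> s2) \<otimes> y = s1 \<otimes> y \<oplus> s2 \<otimes> y" using yc l_distr by simp
    have "s1 \<otimes> y \<oplus> s2 \<otimes> y \<in> ideal_prod R J (Q (a + b))"
      using ideal_prod.sum[of "s1 \<otimes> y" R J "Q (a+b)" "s2 \<otimes> y"] sum(2) sum(4) by simp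
    then show ?case using e by simp
  qed
qed

lemma Q_mult': "x \<in> Q a \<Longrightarrow> y \<in> Q b \<Longrightarrow> c \<le> a + b \<Longrightarrow> x \<otimes> y \<in> Q c"
  using Q_mult Q_mono by blast

lemma Q_zero: "\<zero> \<in> Q n"
  using additive_subgroup.zero_closed[OF ideal.axioms(1)[OF Q_ideal]] .

lemma Q_add: "x \<in> Q n \<Longrightarrow> y \<in> Q n \<Longrightarrow> x \<oplus> y \<in> Q n"
  using additive_subgroup.a_closed[OF ideal.axioms(1)[OF Q_ideal]] by blast

lemma cl_eq: "x \<in> carrier R \<Longrightarrow> y \<in> carrier R \<Longrightarrow> (cl n x = cl n y) \<longleftrightarrow> x \<ominus> y \<in> Q (Suc n)"
  using cos_eq[OF Q_ideal] by blast

lemma cl_rep: "x \<in> Q n \<Longrightarrow> gr_rep (cl n x) \<in> Q n \<and> cl n x = cl n (gr_rep (cl n x)) \<and> gr_rep (cl n x) \<ominus> x \<in> Q (Suc n)"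
  using cos_rep[OF Q_ideal Q_ideal Q_Suc_sub] by blast

lemma cl_rep_carr: "x \<in> carrier R \<Longrightarrow> gr_rep (cl n x) \<in> carrier R \<and> gr_rep (cl n x) \<ominus> x \<in> Q (Suc n)"
proof -
  assume "x \<in> carrier R"
  then have "x \<in> Q 0" by simp
  from cos_rep[OF Q_ideal Q_ideal[of 0] Q_mono[of 0 "Suc n"] this] show ?thesis by simp
qed

lemma cl_add: "x \<in> carrier R \<Longrightarrow> y \<in> carrier R \<Longrightarrow> set_add R (cl n x) (cl n y) = cl n (x \<oplus> y)"
  using cls_add[OF Q_ideal] by blast

lemma gr_carrier_iff: "g \<in> carrier (gr R J) \<longleftrightarrow> (\<forall>n. g n \<in> (\<lambda>x. cl n x) ` Q n) \<and> finite {n. g n \<noteq> cl n \<zero>}"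
  unfolding gr_def gr_piece_def by simp

lemma gr_zero: "\<zero>\<^bsub>gr R J\<^esub> = (\<lambda>n. cl n \<zero>)"
  unfolding gr_def by simp

lemma gr_one: "\<one>\<^bsub>gr R J\<^esub> = gr_class R J 0 \<one>"
  unfolding gr_def by simp

lemma gr_add: "g \<oplus>\<^bsub>gr R J\<^esub> h = (\<lambda>n. set_add R (g n) (h n))"
  unfolding gr_def by simp

lemma gr_mult: "g \<otimes>\<^bsub>gr R J\<^esub> h = (\<lambda>n. cl n (\<Oplus>i\<in>{..n}. gr_rep (g i) \<otimes> gr_rep (h (n - i))))"
  unfolding gr_def by simp

lemma gr_norm: "g \<in> carrier (gr R J) \<Longrightarrow> gr_rep (g n) \<in> Q n \<and> g n = cl n (gr_rep (g n))"
proof -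
  assume "g \<in> carrier (gr R J)"
  then obtain x where x: "x \<in> Q n" "g n = cl n x" unfolding gr_carrier_iff by blast
  then show ?thesis using cl_rep[OF x(1)] by simp
qed

lemma gr_rep_carr: "g \<in> carrier (gr R J) \<Longrightarrow> gr_rep (g n) \<in> carrier R"
  using gr_norm Q_carr by blast

lemma gr_bound: "g \<in> carrier (gr R J) \<Longrightarrow> \<exists>N. \<forall>n>N. gr_rep (g n) \<in> Q (Suc n)"
proof -
  assume g: "g \<in> carrier (gr R J)"
  then have "finite {n. g n \<noteq> cl n \<zero>}" unfolding gr_carrier_iff by blast
  then obtain N where N: "\<forall>n\<in>{n. g n \<noteq> cl n \<zero>}. n \<le> N" using finite_nat_set_iff_bounded_le by blast
  have "gr_rep (g n) \<in> Q (Suc n)" if "n > N" for n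
  proof -
    have "g n = cl n \<zero>" using N that by force
    then have "cl n (gr_rep (g n)) = cl n \<zero>" using gr_norm[OF g, of n] by simp
    then show ?thesis using cl_eq[of "gr_rep (g n)" \<zero>] gr_rep_carr[OF g] by (simp add: a_minus_def)
  qed
  then show ?thesis by blast
qed

lemma gr_memI:
  assumes "\<And>n. a n \<in> Q n" "\<And>n. n > N \<Longrightarrow> a n \<in> Q (Suc n)"
  shows "(\<lambda>n. cl n (a n)) \<in> carrier (gr R J)"
proof -
  have "{n. cl n (a n) \<noteq> cl n \<zero>} \<subseteq> {..N}"
  proof
    fix n assume n: "n \<in> {n. cl n (a n) \<noteq> cl n \<zero>}"
    show "n \<in> {..N}"
    proof (rule ccontr)
      assume "n \<notin> {..N}"
      then have "a n \<in> Q (Suc n)" using assms(2) by simp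
      moreover have "a n \<in> carrier R" using assms(1) Q_carr by blast
      ultimately have "cl n (a n) = cl n \<zero>" using cl_eq[of "a n" \<zero>] by (simp add: a_minus_def)
      then show False using n by simp
    qed
  qed
  then have "finite {n. cl n (a n) \<noteq> cl n \<zero>}" using finite_subset by blast
  then show ?thesis unfolding gr_carrier_iff using assms(1) by blast
qed

lemma gr_eta: "g \<in> carrier (gr R J) \<Longrightarrow> g = (\<lambda>n. cl n (gr_rep (g n)))"
  using gr_norm by (intro ext) blast

lemma gr_add_eval: "g \<in> carrier (gr R J) \<Longrightarrow> h \<in> carrier (gr R J) \<Longrightarrow>
   g \<oplus>\<^bsub>gr R J\<^esub> h = (\<lambda>n. cl n (gr_rep (g n) \<oplus> gr_rep (h n)))"
proof -
  assume g: "g \<in> carrier (gr R J)" and h: "h \<in> carrier (gr R J)"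
  show ?thesis unfolding gr_add
  proof (rule ext)
    fix n
    have "set_add R (g n) (h n) = set_add R (cl n (gr_rep (g n))) (cl n (gr_rep (h n)))" using gr_norm[OF g] gr_norm[OF h] by metis
    also have "\<dots> = cl n (gr_rep (g n) \<oplus> gr_rep (h n))" using cl_add gr_rep_carr g h by blast
    finally show "set_add R (g n) (h n) = cl n (gr_rep (g n) \<oplus> gr_rep (h n))" .
  qed
qed

end


declare ideal_pow.simps(2)[simp del]

context grJ
begin

lemma gr_add_closed: "g \<in> carrier (gr R J) \<Longrightarrow> h \<in> carrier (gr R J) \<Longrightarrow> g \<oplus>\<^bsub>gr R J\<^esub> h \<in> carrier (gr R J)"
proof -
  assume g: "g \<in> carrier (gr R J)" and h: "h \<in> carrier (gr R J)"
  obtain N1 where N1: "\<forall>n>N1. gr_rep (g n) \<in> Q (Suc n)" using gr_bound[OF g] by blast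
  obtain N2 where N2: "\<forall>n>N2. gr_rep (h n) \<in> Q (Suc n)" using gr_bound[OF h] by blast
  have "(\<lambda>n. cl n (gr_rep (g n) \<oplus> gr_rep (h n))) \<in> carrier (gr R J)"
  proof (rule gr_memI[where N = "max N1 N2"])
    fix n show "gr_rep (g n) \<oplus> gr_rep (h n) \<in> Q n" using gr_norm[OF g] gr_norm[OF h] Q_add by blast
  next
    fix n assume "n > max N1 N2"
    then show "gr_rep (g n) \<oplus> gr_rep (h n) \<in> Q (Suc n)" using N1 N2 Q_add by simp
  qed
  then show ?thesis using gr_add_eval[OF g h] by simp
qed

lemma gr_zero_closed: "\<zero>\<^bsub>gr R J\<^esub> \<in> carrier (gr R J)"
  unfolding gr_zero using gr_memI[of "\<lambda>n. \<zero>" 0] Q_zero by blast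

lemma gr_abelian_monoid: "abelian_monoid (gr R J)"
proof (rule abelian_monoidI)
  fix x y assume "x \<in> carrier (gr R J)" "y \<in> carrier (gr R J)"
  then show "x \<oplus>\<^bsub>gr R J\<^esub> y \<in> carrier (gr R J)" by (rule gr_add_closed)
next
  show "\<zero>\<^bsub>gr R J\<^esub> \<in> carrier (gr R J)" by (rule gr_zero_closed)
next
  fix x y z assume x: "x \<in> carrier (gr R J)" and y: "y \<in> carrier (gr R J)" and z: "z \<in> carrier (gr R J)"
  show "x \<oplus>\<^bsub>gr R J\<^esub> y \<oplus>\<^bsub>gr R J\<^esub> z = x \<oplus>\<^bsub>gr R J\<^esub> (y \<oplus>\<^bsub>gr R J\<^esub> z)"
    unfolding gr_add
  proof (rule ext)
    fix n
    have a: "gr_rep (x n) \<in> carrier R" "gr_rep (y n) \<in> carrier R" "gr_rep (z n) \<in> carrier R"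
      using gr_rep_carr x y z by auto
    have "set_add R (set_add R (x n) (y n)) (z n) =
      set_add R (set_add R (cl n (gr_rep (x n))) (cl n (gr_rep (y n)))) (cl n (gr_rep (z n)))"
      using gr_norm[OF x] gr_norm[OF y] gr_norm[OF z] by metis
    also have "\<dots> = cl n (gr_rep (x n) \<oplus> gr_rep (y n) \<oplus> gr_rep (z n))"
      using a cl_add by simp
    also have "\<dots> = cl n (gr_rep (x n) \<oplus> (gr_rep (y n) \<oplus> gr_rep (z n)))"
      using a by (simp add: a_assoc)
    also have "\<dots> = set_add R (cl n (gr_rep (x n))) (set_add R (cl n (gr_rep (y n))) (cl n (gr_rep (z n))))"
      using a cl_add by simp
    also have "\<dots> = set_add R (x n) (set_add R (y n) (z n))"
      using gr_norm[OF x] gr_norm[OF y] gr_norm[OF z] by metis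
    finally show "set_add R (set_add R (x n) (y n)) (z n) = set_add R (x n) (set_add R (y n) (z n))" .
  qed
next
  fix x assume x: "x \<in> carrier (gr R J)"
  show "\<zero>\<^bsub>gr R J\<^esub> \<oplus>\<^bsub>gr R J\<^esub> x = x"
    unfolding gr_add gr_zero
  proof (rule ext)
    fix n
    have a: "gr_rep (x n) \<in> carrier R" using gr_rep_carr x by auto
    have "set_add R (cl n \<zero>) (x n) = set_add R (cl n \<zero>) (cl n (gr_rep (x n)))"
      using gr_norm[OF x] by metis
    also have "\<dots> = cl n (gr_rep (x n))" using a cl_add[of \<zero> "gr_rep (x n)"] by simp
    also have "\<dots> = x n" using gr_norm[OF x] by metis
    finally show "set_add R (cl n \<zero>) (x n) = x n" .
  qed
next
  fix x y assume x: "x \<in> carrier (gr R J)" and y: "y \<in> carrier (gr R J)"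
  show "x \<oplus>\<^bsub>gr R J\<^esub> y = y \<oplus>\<^bsub>gr R J\<^esub> x"
    unfolding gr_add
  proof (rule ext)
    fix n
    have a: "gr_rep (x n) \<in> carrier R" "gr_rep (y n) \<in> carrier R"
      using gr_rep_carr x y by auto
    have "set_add R (x n) (y n) = set_add R (cl n (gr_rep (x n))) (cl n (gr_rep (y n)))"
      using gr_norm[OF x] gr_norm[OF y] by metis
    also have "\<dots> = cl n (gr_rep (y n) \<oplus> gr_rep (x n))" using a cl_add by (simp add: a_comm)
    also have "\<dots> = set_add R (cl n (gr_rep (y n))) (cl n (gr_rep (x n)))" using a cl_add by simp
    also have "\<dots> = set_add R (y n) (x n)" using gr_norm[OF x] gr_norm[OF y] by metis
    finally show "set_add R (x n) (y n) = set_add R (y n) (x n)" .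
  qed
qed

lemma gr_finsum_eval:
  assumes "finite A" "F \<in> A \<rightarrow> carrier (gr R J)" "\<And>i. i \<in> A \<Longrightarrow> F i n = cl n (b i)"
    "b \<in> A \<rightarrow> carrier R"
  shows "finsum (gr R J) F A n = cl n (finsum R b A)"
  using assms
proof (induct A rule: finite_induct)
  case empty
  interpret GG: abelian_monoid "gr R J" by (rule gr_abelian_monoid)
  show ?case by (simp add: gr_zero)
next
  case (insert x A)
  interpret GG: abelian_monoid "gr R J" by (rule gr_abelian_monoid)
  have FA: "F \<in> A \<rightarrow> carrier (gr R J)" "F x \<in> carrier (gr R J)" using insert(4) by auto
  have bA: "b \<in> A \<rightarrow> carrier R" "b x \<in> carrier R" using insert(6) by auto
  have e1: "finsum (gr R J) F (insert x A) = F x \<oplus>\<^bsub>gr R J\<^esub> finsum (gr R J) F A"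
    by (rule GG.finsum_insert[OF insert(1) insert(2) FA])
  have e2: "finsum R b (insert x A) = b x \<oplus> finsum R b A"
    by (rule finsum_insert[OF insert(1) insert(2) bA])
  have ih: "finsum (gr R J) F A n = cl n (finsum R b A)" using insert FA bA by auto
  have "finsum (gr R J) F (insert x A) n = set_add R (F x n) (finsum (gr R J) F A n)"
    unfolding e1 gr_add by simp
  also have "\<dots> = set_add R (cl n (b x)) (cl n (finsum R b A))" using ih insert(5) by simp
  also have "\<dots> = cl n (b x \<oplus> finsum R b A)" using cl_add bA finsum_closed by simp
  finally show ?case using e2 by simp
qed

lemma gr_mult_closed:
  assumes g: "g \<in> carrier (gr R J)" and h: "h \<in> carrier (gr R J)"
  shows "g \<otimes>\<^bsub>gr R J\<^esub> h \<in> carrier (gr R J)"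
proof -
  obtain N1 where N1: "\<forall>n>N1. gr_rep (g n) \<in> Q (Suc n)" using gr_bound[OF g] by blast
  obtain N2 where N2: "\<forall>n>N2. gr_rep (h n) \<in> Q (Suc n)" using gr_bound[OF h] by blast
  have "(\<lambda>n. cl n (\<Oplus>i\<in>{..n}. gr_rep (g i) \<otimes> gr_rep (h (n - i)))) \<in> carrier (gr R J)"
  proof (rule gr_memI[where N = "N1 + N2"])
    fix n
    show "(\<Oplus>i\<in>{..n}. gr_rep (g i) \<otimes> gr_rep (h (n - i))) \<in> Q n"
    proof (rule finsum_in_ideal[OF Q_ideal])
      fix i assume "i \<in> {..n}"
      then show "gr_rep (g i) \<otimes> gr_rep (h (n - i)) \<in> Q n"
        using gr_norm[OF g, of i] gr_norm[OF h, of "n - i"] Q_mult'[of _ i _ "n - i" n] by auto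
    qed simp
  next
    fix n assume n: "n > N1 + N2"
    show "(\<Oplus>i\<in>{..n}. gr_rep (g i) \<otimes> gr_rep (h (n - i))) \<in> Q (Suc n)"
    proof (rule finsum_in_ideal[OF Q_ideal])
      fix i assume i: "i \<in> {..n}"
      show "gr_rep (g i) \<otimes> gr_rep (h (n - i)) \<in> Q (Suc n)"
      proof (cases "i > N1")
        case True
        then show ?thesis using N1 gr_norm[OF h, of "n - i"] Q_mult'[of _ "Suc i" _ "n - i" "Suc n"] i by auto
      next
        case False
        then have "n - i > N2" using n by auto
        then show ?thesis using N2 gr_norm[OF g, of i] Q_mult'[of _ i _ "Suc (n - i)" "Suc n"] i by auto
      qed
    qed simp
  qed
  then show ?thesis unfolding gr_mult .
qed

end

declare ideal_pow.simps(2)[simp del]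

sublocale grctx \<subseteq> GR: grJ R m
  by (intro grJ.intro grJ_axioms.intro R.ring_axioms m_ideal)

sublocale grctx \<subseteq> GP: grJ P Jgen
  by (intro grJ.intro grJ_axioms.intro UP_ring Jgen_ideal)

context grctx
begin

abbreviation G where "G \<equiv> gr R m"
abbreviation GPr where "GPr \<equiv> gr P Jgen"
abbreviation UG where "UG \<equiv> UP G"

lemma UG_carrier: "p \<in> carrier UG \<longleftrightarrow> (\<forall>k. p k \<in> carrier G) \<and> (\<exists>N. bound \<zero>\<^bsub>G\<^esub> N p)"
  unfolding UP_def up_def by auto

lemma UG_mult: "p \<in> carrier UG \<Longrightarrow> q \<in> carrier UG \<Longrightarrow>
  p \<otimes>\<^bsub>UG\<^esub> q = (\<lambda>n. finsum G (\<lambda>i. p i \<otimes>\<^bsub>G\<^esub> q (n - i)) {..n})"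
  unfolding UP_def by simp

lemma UG_add: "p \<in> carrier UG \<Longrightarrow> q \<in> carrier UG \<Longrightarrow>
  p \<oplus>\<^bsub>UG\<^esub> q = (\<lambda>n. p n \<oplus>\<^bsub>G\<^esub> q n)"
  unfolding UP_def by simp

lemma UG_one: "\<one>\<^bsub>UG\<^esub> = (\<lambda>i. if i = 0 then \<one>\<^bsub>G\<^esub> else \<zero>\<^bsub>G\<^esub>)"
  unfolding UP_def by simp

lemma UG_monom: "a \<in> carrier G \<Longrightarrow> up_ring.monom UG a n = (\<lambda>i. if i = n then a else \<zero>\<^bsub>G\<^esub>)"
  unfolding UP_def by simp

lemma UG_coeff: "p \<in> carrier UG \<Longrightarrow> up_ring.coeff UG p k = p k"
  unfolding UP_def by simp

lemma GPQ: "GP.Q n = Jn n" by (rule pow_eq)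

definition phi where
  "phi g = (\<lambda>k d. M (Suc d) +> up_ring.coeff P (gr_rep (g (d + k))) k)"

lemma coeff_Jn: "f \<in> Jn n \<Longrightarrow> up_ring.coeff P f k \<in> M (n - k)"
  unfolding Jn_def by blast

lemma phi_cl:
  assumes f: "f \<in> carrier P"
  shows "M (Suc d) +> up_ring.coeff P (gr_rep (GP.cl (d + k) f)) k = M (Suc d) +> up_ring.coeff P f k"
proof -
  have r: "gr_rep (GP.cl (d + k) f) \<in> carrier P"
    and d: "gr_rep (GP.cl (d + k) f) \<ominus>\<^bsub>P\<^esub> f \<in> Jn (Suc (d + k))"
    using GP.cl_rep_carr[OF f, of "d + k"] GPQ by auto
  have "up_ring.coeff P (gr_rep (GP.cl (d + k) f) \<ominus>\<^bsub>P\<^esub> f) k \<in> M (Suc (d + k) - k)"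
    using coeff_Jn[OF d] .
  then have "up_ring.coeff P (gr_rep (GP.cl (d + k) f)) k \<ominus> up_ring.coeff P f k \<in> M (Suc d)"
    using coeff_minus[OF r f] by (simp add: Suc_diff_le)
  then show ?thesis using GR.cl_eq coeff_closed r f by blast
qed

lemma GP_norm: "g \<in> carrier GPr \<Longrightarrow> gr_rep (g n) \<in> Jn n \<and> g n = GP.cl n (gr_rep (g n))"
  using GP.gr_norm[of g n] GPQ by simp

lemma GP_bound: "g \<in> carrier GPr \<Longrightarrow> \<exists>N. \<forall>n>N. gr_rep (g n) \<in> Jn (Suc n)"
  using GP.gr_bound[of g] GPQ by simp

lemma phi_comp_carrier:
  assumes g: "g \<in> carrier GPr"
  shows "phi g k \<in> carrier G"
proof -
  obtain N where N: "\<forall>n>N. gr_rep (g n) \<in> Jn (Suc n)" using GP_bound[OF g] by blast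
  have "(\<lambda>d. GR.cl d (up_ring.coeff P (gr_rep (g (d + k))) k)) \<in> carrier G"
  proof (rule GR.gr_memI[where N = N])
    fix d show "up_ring.coeff P (gr_rep (g (d + k))) k \<in> M d"
      using coeff_Jn[of _ "d + k" k] GP_norm[OF g, of "d + k"] by simp
  next
    fix d assume "d > N"
    then have "gr_rep (g (d + k)) \<in> Jn (Suc (d + k))" using N by simp
    then show "up_ring.coeff P (gr_rep (g (d + k))) k \<in> M (Suc d)"
      using coeff_Jn[of _ "Suc (d + k)" k] by (simp add: Suc_diff_le)
  qed
  then show ?thesis unfolding phi_def .
qed

lemma phi_carrier:
  assumes g: "g \<in> carrier GPr"
  shows "phi g \<in> carrier UG"
proof -
  obtain N where N: "\<forall>n>N. gr_rep (g n) \<in> Jn (Suc n)" using GP_bound[OF g] by blast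
  have "phi g k = \<zero>\<^bsub>G\<^esub>" if k: "k > N" for k
    unfolding GR.gr_zero phi_def
  proof (rule ext)
    fix d
    have "gr_rep (g (d + k)) \<in> Jn (Suc (d + k))" using N k by simp
    then have c: "up_ring.coeff P (gr_rep (g (d + k))) k \<in> M (Suc d)"
      using coeff_Jn[of _ "Suc (d + k)" k] by (simp add: Suc_diff_le)
    then have "up_ring.coeff P (gr_rep (g (d + k))) k \<in> carrier R" using GR.Q_carr by blast
    then show "GR.cl d (up_ring.coeff P (gr_rep (g (d + k))) k) = GR.cl d \<zero>"
      using GR.cl_eq c by (simp add: a_minus_def)
  qed
  then have "bound \<zero>\<^bsub>G\<^esub> N (phi g)" by blast
  then show ?thesis unfolding UG_carrier using phi_comp_carrier[OF g] by blast
qed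

lemma phi_inj:
  assumes g: "g \<in> carrier GPr" and h: "h \<in> carrier GPr" and e: "phi g = phi h"
  shows "g = h"
proof (rule ext)
  fix n
  have rg: "gr_rep (g n) \<in> Jn n" and rh: "gr_rep (h n) \<in> Jn n"
    using GP_norm[OF g] GP_norm[OF h] by auto
  have rgc: "gr_rep (g n) \<in> carrier P" and rhc: "gr_rep (h n) \<in> carrier P"
    using rg rh Jn_carr by auto
  have "gr_rep (g n) \<ominus>\<^bsub>P\<^esub> gr_rep (h n) \<in> Jn (Suc n)"
    unfolding Jn_def
  proof (intro CollectI conjI allI)
    show "gr_rep (g n) \<ominus>\<^bsub>P\<^esub> gr_rep (h n) \<in> carrier P" using rgc rhc by simp
    fix k
    show "up_ring.coeff P (gr_rep (g n) \<ominus>\<^bsub>P\<^esub> gr_rep (h n)) k \<in> M (Suc n - k)"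
    proof (cases "k \<le> n")
      case True
      define d where "d = n - k"
      have nd: "n = d + k" using True d_def by simp
      have "phi g k d = phi h k d" using e by simp
      then have "GR.cl d (up_ring.coeff P (gr_rep (g n)) k) = GR.cl d (up_ring.coeff P (gr_rep (h n)) k)"
        unfolding phi_def nd by simp
      then have "up_ring.coeff P (gr_rep (g n)) k \<ominus> up_ring.coeff P (gr_rep (h n)) k \<in> M (Suc d)"
        using GR.cl_eq coeff_closed rgc rhc by blast
      then show ?thesis using coeff_minus[OF rgc rhc] nd by (simp add: Suc_diff_le)
    next
      case False
      then have "Suc n - k = 0" by simp
      then show ?thesis using coeff_closed rgc rhc by simp
    qed
  qed
  then show "g n = h n" using GP_norm[OF g] GP_norm[OF h] GP.cl_eq[OF rgc rhc, of n] GPQ by metis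
qed

end

declare ideal_pow.simps(2)[simp del]

context grctx
begin

lemma carrier_P_up: "carrier P = up R" unfolding P_def UP_def by (rule partial_object.select_convs(1))

lemma coeff_P_def: "up_ring.coeff P = (\<lambda>p\<in>up R. \<lambda>n. p n)"
  unfolding P_def UP_def by (rule up_ring.select_convs(2))

lemma coeff_P: "f \<in> carrier P \<Longrightarrow> up_ring.coeff P f k = f k"
  unfolding coeff_P_def carrier_P_up by simp

lemma rep_M: "g \<in> carrier G \<Longrightarrow> gr_rep (g n) \<in> M n"
  using GR.gr_norm by blast

lemma G_eta: "g \<in> carrier G \<Longrightarrow> g n = GR.cl n (gr_rep (g n))"
  using GR.gr_norm by blast

definition poly where "poly p n = (\<lambda>k. if k \<le> n then gr_rep (p k (n - k)) else \<zero>)"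
definition psi where "psi p = (\<lambda>n. GP.cl n (poly p n))"

lemma rep_zero_G: "gr_rep (\<zero>\<^bsub>G\<^esub> d) \<in> M (Suc d)"
proof -
  have "gr_rep (GR.cl d \<zero>) \<ominus> \<zero> \<in> M (Suc d)" "gr_rep (GR.cl d \<zero>) \<in> carrier R"
    using GR.cl_rep_carr[of \<zero> d] by auto
  then show ?thesis unfolding GR.gr_zero by (simp add: a_minus_def)
qed

lemma poly_Jn:
  assumes p: "p \<in> carrier UG"
  shows "poly p n \<in> Jn n"
proof -
  have pk: "p k \<in> carrier G" for k using p UG_carrier by blast
  have c: "poly p n k \<in> M (n - k)" for k
    using rep_M[OF pk[of k], of "n - k"] M_zero unfolding poly_def by simp
  have b: "bound \<zero> n (poly p n)" unfolding bound_def poly_def by simp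
  have "poly p n \<in> up R" unfolding up_def using c M_carr b by blast
  then show ?thesis unfolding Jn_def using c coeff_P carrier_P_up by auto
qed

lemma psi_carrier:
  assumes p: "p \<in> carrier UG"
  shows "psi p \<in> carrier GPr"
proof -
  have pk: "p k \<in> carrier G" for k using p UG_carrier by blast
  obtain K where K: "bound \<zero>\<^bsub>G\<^esub> K p" using p UG_carrier by blast
  define Nf where "Nf k = (SOME N. \<forall>d>N. gr_rep (p k d) \<in> M (Suc d))" for k
  have Nf: "gr_rep (p k d) \<in> M (Suc d)" if "d > Nf k" for k d
  proof -
    have "\<exists>N. \<forall>d>N. gr_rep (p k d) \<in> M (Suc d)" using GR.gr_bound pk by blast
    then have "\<forall>d>Nf k. gr_rep (p k d) \<in> M (Suc d)" unfolding Nf_def by (rule someI_ex)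
    then show ?thesis using that by blast
  qed
  define S where "S = (\<Sum>j\<le>K. Nf j)"
  have NS: "Nf k \<le> S" if "k \<le> K" for k
    unfolding S_def using that by (intro member_le_sum) auto
  have "(\<lambda>n. GP.cl n (poly p n)) \<in> carrier GPr"
  proof (rule GP.gr_memI[where N = "K + S"])
    fix n show "poly p n \<in> GP.Q n" using poly_Jn[OF p] GPQ by simp
  next
    fix n assume n: "n > K + S"
    have pc: "poly p n \<in> carrier P" using poly_Jn[OF p] Jn_carr by blast
    have "up_ring.coeff P (poly p n) k \<in> M (Suc n - k)" for k
    proof (cases "k \<le> n")
      case True
      have "gr_rep (p k (n - k)) \<in> M (Suc (n - k))"
      proof (cases "k \<le> K")
        case True
        have "n - k > Nf k" using NS[OF True] n \<open>k \<le> n\<close> \<open>k \<le> K\<close> by linarith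
        then show ?thesis using Nf by blast
      next
        case False
        then have "p k = \<zero>\<^bsub>G\<^esub>" using K unfolding bound_def by simp
        then show ?thesis using rep_zero_G by simp
      qed
      then show ?thesis using True coeff_P[OF pc] unfolding poly_def by (simp add: Suc_diff_le)
    next
      case False
      then show ?thesis using coeff_P[OF pc] M_zero unfolding poly_def by simp
    qed
    then show "poly p n \<in> GP.Q (Suc n)" using GPQ pc unfolding Jn_def by simp
  qed
  then show ?thesis unfolding psi_def .
qed

lemma phi_psi:
  assumes p: "p \<in> carrier UG"
  shows "phi (psi p) = p"
proof (intro ext)
  fix k d
  have pk: "p k \<in> carrier G" using p UG_carrier by blast
  have pc: "poly p (d + k) \<in> carrier P" using poly_Jn[OF p] Jn_carr by blast
  have "phi (psi p) k d = GR.cl d (up_ring.coeff P (poly p (d + k)) k)"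
    unfolding phi_def psi_def using phi_cl[OF pc] by simp
  also have "\<dots> = GR.cl d (gr_rep (p k d))" using coeff_P[OF pc] unfolding poly_def by simp
  also have "\<dots> = p k d" by (rule sym[OF G_eta[OF pk]])
  finally show "phi (psi p) k d = p k d" .
qed

lemma phi_bij: "bij_betw phi (carrier GPr) (carrier UG)"
  unfolding bij_betw_def
proof
  show "inj_on phi (carrier GPr)" using phi_inj by (meson inj_onI)
  show "phi ` carrier GPr = carrier UG"
  proof
    show "phi ` carrier GPr \<subseteq> carrier UG" using phi_carrier by blast
    show "carrier UG \<subseteq> phi ` carrier GPr"
    proof
      fix p assume "p \<in> carrier UG"
      then show "p \<in> phi ` carrier GPr" using phi_psi psi_carrier by (metis imageI)
    qed
  qed
qed

end

declare ideal_pow.simps(2)[simp del]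

context grctx
begin

lemma phi_class:
  assumes f: "f \<in> carrier P"
  shows "phi (gr_class P Jgen N f) k d = GR.cl d (if d + k = N then up_ring.coeff P f k else \<zero>)"
proof -
  have fc: "(if d + k = N then f else \<zero>\<^bsub>P\<^esub>) \<in> carrier P" using f by simp
  have "phi (gr_class P Jgen N f) k d = GR.cl d (up_ring.coeff P (if d + k = N then f else \<zero>\<^bsub>P\<^esub>) k)"
    unfolding phi_def gr_class_def using phi_cl[OF fc] by simp
  then show ?thesis by (cases "d + k = N") simp_all
qed

lemma G_class_eval: "gr_class R m n r d = GR.cl d (if d = n then r else \<zero>)"
  unfolding gr_class_def by simp

lemma G_class_carrier:
  assumes r: "r \<in> M n"
  shows "gr_class R m n r \<in> carrier G"
proof -
  have "(\<lambda>d. GR.cl d (if d = n then r else \<zero>)) \<in> carrier G"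
    by (rule GR.gr_memI[where N = n]) (use r M_zero in auto)
  then show ?thesis unfolding gr_class_def .
qed

lemma G_one_carrier: "\<one>\<^bsub>G\<^esub> \<in> carrier G"
  unfolding GR.gr_one by (rule G_class_carrier) simp

lemma phi_one: "phi \<one>\<^bsub>GPr\<^esub> = \<one>\<^bsub>UG\<^esub>"
proof (intro ext)
  fix k d
  have "phi \<one>\<^bsub>GPr\<^esub> k d = GR.cl d (if d + k = 0 then up_ring.coeff P \<one>\<^bsub>P\<^esub> k else \<zero>)"
    unfolding GP.gr_one by (rule phi_class) simp
  also have "\<dots> = \<one>\<^bsub>UG\<^esub> k d"
    unfolding UG_one GR.gr_one G_class_eval GR.gr_zero by (cases "k = 0") auto
  finally show "phi \<one>\<^bsub>GPr\<^esub> k d = \<one>\<^bsub>UG\<^esub> k d" .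
qed

lemma phi_add:
  assumes g: "g \<in> carrier GPr" and h: "h \<in> carrier GPr"
  shows "phi (g \<oplus>\<^bsub>GPr\<^esub> h) = phi g \<oplus>\<^bsub>UG\<^esub> phi h"
proof (intro ext)
  fix k d
  have rg: "gr_rep (g n) \<in> carrier P" and rh: "gr_rep (h n) \<in> carrier P" for n
    using GP.gr_rep_carr[OF g] GP.gr_rep_carr[OF h] by auto
  have a: "up_ring.coeff P (gr_rep (g (d + k))) k \<in> carrier R"
          "up_ring.coeff P (gr_rep (h (d + k))) k \<in> carrier R" using rg rh by auto
  have "phi (g \<oplus>\<^bsub>GPr\<^esub> h) k d
      = GR.cl d (up_ring.coeff P (gr_rep (GP.cl (d + k) (gr_rep (g (d + k)) \<oplus>\<^bsub>P\<^esub> gr_rep (h (d + k))))) k)"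
    unfolding phi_def GP.gr_add_eval[OF g h] by simp
  also have "\<dots> = GR.cl d (up_ring.coeff P (gr_rep (g (d + k)) \<oplus>\<^bsub>P\<^esub> gr_rep (h (d + k))) k)"
    by (rule phi_cl) (use rg rh in simp)
  also have "\<dots> = GR.cl d (up_ring.coeff P (gr_rep (g (d + k))) k \<oplus> up_ring.coeff P (gr_rep (h (d + k))) k)"
    using rg rh by simp
  also have "\<dots> = set_add R (phi g k d) (phi h k d)"
    unfolding phi_def using GR.cl_add[OF a] by simp
  also have "\<dots> = (phi g \<oplus>\<^bsub>UG\<^esub> phi h) k d"
    unfolding UG_add[OF phi_carrier[OF g] phi_carrier[OF h]] GR.gr_add by simp
  finally show "phi (g \<oplus>\<^bsub>GPr\<^esub> h) k d = (phi g \<oplus>\<^bsub>UG\<^esub> phi h) k d" .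
qed

end

declare ideal_pow.simps(2)[simp del]

lemma (in ring) finsum_swap:
  assumes "finite A" "finite B" "\<And>i j. i \<in> A \<Longrightarrow> j \<in> B \<Longrightarrow> T i j \<in> carrier R"
  shows "(\<Oplus>i\<in>A. \<Oplus>j\<in>B. T i j) = (\<Oplus>j\<in>B. \<Oplus>i\<in>A. T i j)"
  using assms(1,3)
proof (induct A rule: finite_induct)
  case empty
  then show ?case using assms(2) by (simp add: finsum_zero)
next
  case (insert x A)
  have c1: "(\<lambda>j. T x j) \<in> B \<rightarrow> carrier R" using insert by auto
  have c2: "(\<lambda>j. \<Oplus>i\<in>A. T i j) \<in> B \<rightarrow> carrier R" using insert by (auto intro!: finsum_closed)
  have c3: "(\<lambda>i. \<Oplus>j\<in>B. T i j) \<in> A \<rightarrow> carrier R" using insert by (auto intro!: finsum_closed)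
  have "(\<Oplus>i\<in>insert x A. \<Oplus>j\<in>B. T i j) = (\<Oplus>j\<in>B. T x j) \<oplus> (\<Oplus>i\<in>A. \<Oplus>j\<in>B. T i j)"
    by (rule finsum_insert[OF insert(1) insert(2) c3]) (use c1 in \<open>simp add: finsum_closed\<close>)
  also have "\<dots> = (\<Oplus>j\<in>B. T x j) \<oplus> (\<Oplus>j\<in>B. \<Oplus>i\<in>A. T i j)" using insert by simp
  also have "\<dots> = (\<Oplus>j\<in>B. T x j \<oplus> (\<Oplus>i\<in>A. T i j))"
    by (rule finsum_addf[OF c1 c2, symmetric])
  also have "\<dots> = (\<Oplus>j\<in>B. \<Oplus>i\<in>insert x A. T i j)"
  proof (rule finsum_cong')
    fix j assume j: "j \<in> B"
    have "(\<lambda>i. T i j) \<in> A \<rightarrow> carrier R" using insert j by auto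
    then show "T x j \<oplus> (\<Oplus>i\<in>A. T i j) = (\<Oplus>i\<in>insert x A. T i j)"
      using finsum_insert[OF insert(1) insert(2), of "\<lambda>i. T i j"] insert j by simp
  qed (use insert in \<open>auto intro!: finsum_closed\<close>)
  finally show ?case .
qed

context grJ
begin

lemma prod_cong:
  assumes x: "x \<in> Q a" "x' \<in> carrier R" "x' \<ominus> x \<in> Q (Suc a)"
    and y: "y \<in> Q b" "y' \<in> carrier R" "y' \<ominus> y \<in> Q (Suc b)"
  shows "cl (a + b) (x' \<otimes> y') = cl (a + b) (x \<otimes> y)"
proof -
  have xc: "x \<in> carrier R" and yc: "y \<in> carrier R" using x y Q_carr by auto
  have e1: "x' \<otimes> y' \<ominus> x \<otimes> y = (x' \<ominus> x) \<otimes> y' \<oplus> x \<otimes> (y' \<ominus> y)"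
    using xc yc x(2) y(2) by algebra
  have e2: "y' = (y' \<ominus> y) \<oplus> y" using yc y(2) by algebra
  have "y' \<ominus> y \<in> Q b" using y(3) Q_Suc_sub by blast
  then have y'Q: "y' \<in> Q b" using e2 Q_add[OF _ y(1)] by metis
  have "(x' \<ominus> x) \<otimes> y' \<in> Q (Suc (a + b))" using Q_mult'[OF x(3) y'Q] by simp
  moreover have "x \<otimes> (y' \<ominus> y) \<in> Q (Suc (a + b))" using Q_mult'[OF x(1) y(3)] by simp
  ultimately have "x' \<otimes> y' \<ominus> x \<otimes> y \<in> Q (Suc (a + b))" using e1 Q_add by simp
  then show ?thesis using cl_eq xc yc x(2) y(2) by simp
qed

end

context grctx
begin

lemma arith_aux:
  fixes i j k d n :: nat
  assumes "i \<le> n" "j \<le> k" "n = d + k" "i \<notin> (\<lambda>e. e + j) ` {..d}"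
  shows "Suc d \<le> (i - j) + ((n - i) - (k - j))"
proof -
  have "\<not> (j \<le> i \<and> i \<le> d + j)"
  proof
    assume "j \<le> i \<and> i \<le> d + j"
    then have "i = (i - j) + j \<and> i - j \<le> d" by arith
    then show False using assms(4) by blast
  qed
  then show ?thesis using assms by linarith
qed

lemma phi_mult:
  assumes g: "g \<in> carrier GPr" and h: "h \<in> carrier GPr"
  shows "phi (g \<otimes>\<^bsub>GPr\<^esub> h) = phi g \<otimes>\<^bsub>UG\<^esub> phi h"
proof (intro ext)
  fix k d :: nat
  define n where "n = d + k"
  define rg where "rg i = gr_rep (g i)" for i
  define rh where "rh i = gr_rep (h i)" for i
  define A where "A i j = up_ring.coeff P (rg i) j" for i j
  define B where "B i j = up_ring.coeff P (rh i) j" for i j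
  define T where "T i j = A i j \<otimes> B (n - i) (k - j)" for i j
  have rgJ: "rg i \<in> Jn i" and rhJ: "rh i \<in> Jn i" for i
    unfolding rg_def rh_def using GP_norm[OF g] GP_norm[OF h] by auto
  have rgc: "rg i \<in> carrier P" and rhc: "rh i \<in> carrier P" for i
    using rgJ rhJ Jn_carr by auto
  have AM: "A i j \<in> M (i - j)" and BM: "B i j \<in> M (i - j)" for i j
    unfolding A_def B_def using coeff_Jn rgJ rhJ by auto
  have Ac: "A i j \<in> carrier R" and Bc: "B i j \<in> carrier R" for i j
    unfolding A_def B_def using rgc rhc by auto
  have Tc: "T i j \<in> carrier R" for i j unfolding T_def using Ac Bc by simp
  define S where "S = (\<Oplus>\<^bsub>P\<^esub>i\<in>{..n}. rg i \<otimes>\<^bsub>P\<^esub> rh (n - i))"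
  have Sc: "S \<in> carrier P" unfolding S_def using rgc rhc by (intro P.finsum_closed) auto
  have "phi (g \<otimes>\<^bsub>GPr\<^esub> h) k d = GR.cl d (up_ring.coeff P (gr_rep (GP.cl (d + k) S)) k)"
    unfolding phi_def GP.gr_mult S_def rg_def rh_def n_def by simp
  also have "\<dots> = GR.cl d (up_ring.coeff P S k)" by (rule phi_cl[OF Sc])
  also have "up_ring.coeff P S k = (\<Oplus>i\<in>{..n}. \<Oplus>j\<in>{..k}. T i j)"
    unfolding S_def T_def A_def B_def
    using coeff_finsum[of "{..n}" "\<lambda>i. rg i \<otimes>\<^bsub>P\<^esub> rh (n - i)" k] rgc rhc by (simp add: Pi_def)
  also have "(\<Oplus>i\<in>{..n}. \<Oplus>j\<in>{..k}. T i j) = (\<Oplus>j\<in>{..k}. \<Oplus>i\<in>{..n}. T i j)"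
    by (rule R.finsum_swap) (use Tc in auto)
  also have "GR.cl d (\<Oplus>j\<in>{..k}. \<Oplus>i\<in>{..n}. T i j) = GR.cl d (\<Oplus>j\<in>{..k}. \<Oplus>e\<in>{..d}. T (e + j) j)"
  proof (rule R.cls_sum[OF M_ideal])
    fix j assume j: "j \<in> {..k}"
    have sub: "(\<lambda>e. e + j) ` {..d} \<subseteq> {..n}" using j n_def by auto
    have "GR.cl d (\<Oplus>i\<in>{..n}. T i j) = GR.cl d (\<Oplus>i\<in>(\<lambda>e. e + j) ` {..d}. T i j)"
    proof (rule R.cls_extra[OF M_ideal _ sub])
      fix i assume i: "i \<in> {..n} - (\<lambda>e. e + j) ` {..d}"
      have "Suc d \<le> (i - j) + ((n - i) - (k - j))" using arith_aux[of i n j k d] i j n_def by auto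
      then show "T i j \<in> M (Suc d)" unfolding T_def using M_mult'[OF AM BM] by blast
    qed (use Tc in auto)
    also have "(\<Oplus>i\<in>(\<lambda>e. e + j) ` {..d}. T i j) = (\<Oplus>e\<in>{..d}. T (e + j) j)"
      by (rule R.finsum_reindex) (use Tc in auto)
    finally show "GR.cl d (\<Oplus>i\<in>{..n}. T i j) = GR.cl d (\<Oplus>e\<in>{..d}. T (e + j) j)" .
  qed (use Tc in \<open>auto intro!: R.finsum_closed\<close>)
  also have "\<dots> = GR.cl d (\<Oplus>j\<in>{..k}. \<Oplus>e\<in>{..d}. gr_rep (phi g j e) \<otimes> gr_rep (phi h (k - j) (d - e)))"
  proof (rule R.cls_sum[OF M_ideal])
    fix j assume j: "j \<in> {..k}"
    show "GR.cl d (\<Oplus>e\<in>{..d}. T (e + j) j) = GR.cl d (\<Oplus>e\<in>{..d}. gr_rep (phi g j e) \<otimes> gr_rep (phi h (k - j) (d - e)))"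
    proof (rule R.cls_sum[OF M_ideal])
      fix e assume e: "e \<in> {..d}"
      have pg: "phi g j e = GR.cl e (A (e + j) j)" unfolding phi_def A_def rg_def by simp
      have ni: "n - (e + j) = (d - e) + (k - j)" using e j n_def by auto
      have ph: "phi h (k - j) (d - e) = GR.cl (d - e) (B (n - (e + j)) (k - j))"
        unfolding phi_def B_def rh_def ni by simp
      have x: "A (e + j) j \<in> M e" using AM[of "e + j" j] by simp
      have y: "B (n - (e + j)) (k - j) \<in> M (d - e)" using BM[of "n - (e + j)" "k - j"] ni by simp
      have "GR.cl (e + (d - e)) (gr_rep (phi g j e) \<otimes> gr_rep (phi h (k - j) (d - e)))
          = GR.cl (e + (d - e)) (A (e + j) j \<otimes> B (n - (e + j)) (k - j))"
        unfolding pg ph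
        by (rule GR.prod_cong[OF x _ _ y]) (use GR.cl_rep[OF x] GR.cl_rep[OF y] M_carr in auto)
      then show "GR.cl d (T (e + j) j) = GR.cl d (gr_rep (phi g j e) \<otimes> gr_rep (phi h (k - j) (d - e)))"
        unfolding T_def using e by simp
    qed (use Tc phi_comp_carrier[OF g] phi_comp_carrier[OF h] GR.gr_rep_carr in auto)
  qed (use Tc phi_comp_carrier[OF g] phi_comp_carrier[OF h] GR.gr_rep_carr in \<open>auto intro!: R.finsum_closed\<close>)
  also have "\<dots> = finsum G (\<lambda>j. phi g j \<otimes>\<^bsub>G\<^esub> phi h (k - j)) {..k} d"
  proof (rule GR.gr_finsum_eval[symmetric])
    show "(\<lambda>j. phi g j \<otimes>\<^bsub>G\<^esub> phi h (k - j)) \<in> {..k} \<rightarrow> carrier G"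
      using GR.gr_mult_closed phi_comp_carrier[OF g] phi_comp_carrier[OF h] by blast
    fix j show "(phi g j \<otimes>\<^bsub>G\<^esub> phi h (k - j)) d = GR.cl d (\<Oplus>e\<in>{..d}. gr_rep (phi g j e) \<otimes> gr_rep (phi h (k - j) (d - e)))"
      unfolding GR.gr_mult by simp
  qed (use phi_comp_carrier[OF g] phi_comp_carrier[OF h] GR.gr_rep_carr in \<open>auto intro!: R.finsum_closed\<close>)
  also have "\<dots> = (phi g \<otimes>\<^bsub>UG\<^esub> phi h) k d"
    unfolding UG_mult[OF phi_carrier[OF g] phi_carrier[OF h]] by simp
  finally show "phi (g \<otimes>\<^bsub>GPr\<^esub> h) k d = (phi g \<otimes>\<^bsub>UG\<^esub> phi h) k d" .
qed

end

declare ideal_pow.simps(2)[simp del]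

context grctx
begin

lemma in_ideal_P: "in_ideal P Jgen I = {g \<in> carrier GPr. \<forall>n. g n \<in> (\<lambda>x. GP.cl n x) ` (I \<inter> Jn n)}"
  unfolding in_ideal_def GPQ by simp

lemma in_ideal_R: "in_ideal R m K = {q \<in> carrier G. \<forall>d. q d \<in> (\<lambda>x. GR.cl d x) ` (K \<inter> M d)}"
  unfolding in_ideal_def by simp

lemma phi_in_ideal:
  assumes Ik: "\<And>k. ideal (Ik k) R"
    and I: "I = {p \<in> carrier P. \<forall>k. up_ring.coeff P p k \<in> Ik k}"
  shows "phi ` in_ideal P Jgen I = {p \<in> carrier UG. \<forall>k. up_ring.coeff UG p k \<in> in_ideal R m (Ik k)}"
proof
  show "phi ` in_ideal P Jgen I \<subseteq> {p \<in> carrier UG. \<forall>k. up_ring.coeff UG p k \<in> in_ideal R m (Ik k)}"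
  proof
    fix q assume "q \<in> phi ` in_ideal P Jgen I"
    then obtain g where g: "g \<in> in_ideal P Jgen I" and q: "q = phi g" by blast
    have gc: "g \<in> carrier GPr" using g in_ideal_P by blast
    have "phi g k \<in> in_ideal R m (Ik k)" for k
      unfolding in_ideal_R
    proof (intro CollectI conjI allI)
      show "phi g k \<in> carrier G" by (rule phi_comp_carrier[OF gc])
      fix d
      obtain f where f: "f \<in> I" "f \<in> Jn (d + k)" "g (d + k) = GP.cl (d + k) f"
        using g in_ideal_P by blast
      have fc: "f \<in> carrier P" using f(1) I by blast
      have "phi g k d = GR.cl d (up_ring.coeff P f k)"
        unfolding phi_def f(3) using phi_cl[OF fc] by simp
      moreover have "up_ring.coeff P f k \<in> Ik k" using f(1) I by blast
      moreover have "up_ring.coeff P f k \<in> M d" using coeff_Jn[OF f(2), of k] by simp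
      ultimately show "phi g k d \<in> (\<lambda>x. GR.cl d x) ` (Ik k \<inter> M d)" by blast
    qed
    then show "q \<in> {p \<in> carrier UG. \<forall>k. up_ring.coeff UG p k \<in> in_ideal R m (Ik k)}"
      using q phi_carrier[OF gc] UG_coeff by simp
  qed
  show "{p \<in> carrier UG. \<forall>k. up_ring.coeff UG p k \<in> in_ideal R m (Ik k)} \<subseteq> phi ` in_ideal P Jgen I"
  proof
    fix p assume "p \<in> {p \<in> carrier UG. \<forall>k. up_ring.coeff UG p k \<in> in_ideal R m (Ik k)}"
    then have p: "p \<in> carrier UG" and pk: "\<And>k. p k \<in> in_ideal R m (Ik k)" using UG_coeff by auto
    have pkc: "p k \<in> carrier G" for k using p UG_carrier by blast
    define x where "x k d = (SOME x. x \<in> Ik k \<inter> M d \<and> p k d = GR.cl d x)" for k d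
    have x: "x k d \<in> Ik k \<inter> M d \<and> p k d = GR.cl d (x k d)" for k d
    proof -
      have "\<exists>x. x \<in> Ik k \<inter> M d \<and> p k d = GR.cl d x" using pk[of k] unfolding in_ideal_R by blast
      then show ?thesis unfolding x_def by (rule someI_ex)
    qed
    have xc: "x k d \<in> carrier R" for k d using x M_carr by blast
    define F where "F n = (\<lambda>k. if k \<le> n then x k (n - k) else \<zero>)" for n
    have FP: "F n \<in> carrier P" for n
    proof -
      have b: "bound \<zero> n (F n)" unfolding bound_def F_def by simp
      have "F n \<in> up R" unfolding up_def using xc b unfolding F_def by auto
      then show ?thesis using carrier_P_up by simp
    qed
    have FI: "F n \<in> I" for n
    proof -
      have "F n k \<in> Ik k" for k
        using x additive_subgroup.zero_closed[OF ideal.axioms(1)[OF Ik[of k]]] unfolding F_def by auto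
      then show ?thesis unfolding I using FP coeff_P[OF FP] by simp
    qed
    have FJ: "F n \<in> Jn n" for n
    proof -
      have "F n k \<in> M (n - k)" for k
        using x M_zero unfolding F_def by auto
      then show ?thesis unfolding Jn_def using FP coeff_P[OF FP] by simp
    qed
    have polyc: "poly p n \<in> carrier P" for n using poly_Jn[OF p] Jn_carr by blast
    have "psi p \<in> in_ideal P Jgen I"
      unfolding in_ideal_P
    proof (intro CollectI conjI allI)
      show "psi p \<in> carrier GPr" by (rule psi_carrier[OF p])
      fix n
      have "poly p n \<ominus>\<^bsub>P\<^esub> F n \<in> Jn (Suc n)"
        unfolding Jn_def
      proof (intro CollectI conjI allI)
        show "poly p n \<ominus>\<^bsub>P\<^esub> F n \<in> carrier P" using polyc FP by simp
        fix k
        have e: "up_ring.coeff P (poly p n \<ominus>\<^bsub>P\<^esub> F n) k = poly p n k \<ominus> F n k"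
          using coeff_minus[OF polyc FP] coeff_P[OF polyc] coeff_P[OF FP] by simp
        show "up_ring.coeff P (poly p n \<ominus>\<^bsub>P\<^esub> F n) k \<in> M (Suc n - k)"
        proof (cases "k \<le> n")
          case True
          have xm: "x k (n - k) \<in> M (n - k)" using x by blast
          have "gr_rep (GR.cl (n - k) (x k (n - k))) \<ominus> x k (n - k) \<in> M (Suc (n - k))"
            using GR.cl_rep[OF xm] by blast
          then have "gr_rep (p k (n - k)) \<ominus> x k (n - k) \<in> M (Suc (n - k))" using x by metis
          then show ?thesis using e True unfolding poly_def F_def by (simp add: Suc_diff_le)
        next
          case False
          then show ?thesis using e unfolding poly_def F_def by simp
        qed
      qed
      then have "GP.cl n (poly p n) = GP.cl n (F n)" using GP.cl_eq[OF polyc FP] GPQ by simp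
      then show "psi p n \<in> (\<lambda>x. GP.cl n x) ` (I \<inter> Jn n)" unfolding psi_def using FI FJ by blast
    qed
    then show "p \<in> phi ` in_ideal P Jgen I" using phi_psi[OF p] by (metis imageI)
  qed
qed

lemma phi_TT: "phi (gr_class P Jgen 1 TT) = up_ring.monom UG \<one>\<^bsub>G\<^esub> 1"
proof (intro ext)
  fix k d :: nat
  have "phi (gr_class P Jgen 1 TT) k d = GR.cl d (if d + k = 1 then up_ring.coeff P TT k else \<zero>)"
    by (rule phi_class) simp
  also have "\<dots> = (if k = 1 then \<one>\<^bsub>G\<^esub> else \<zero>\<^bsub>G\<^esub>) d"
    unfolding GR.gr_one G_class_eval GR.gr_zero
    by (cases "k = 1") auto
  also have "\<dots> = up_ring.monom UG \<one>\<^bsub>G\<^esub> 1 k d"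
    by (simp only: UG_monom[OF G_one_carrier])
  finally show "phi (gr_class P Jgen 1 TT) k d = up_ring.monom UG \<one>\<^bsub>G\<^esub> 1 k d" .
qed

lemma phi_const:
  assumes r: "r \<in> M n"
  shows "phi (gr_class P Jgen n (up_ring.monom P r 0)) = up_ring.monom UG (gr_class R m n r) 0"
proof (intro ext)
  fix k d :: nat
  have rc: "r \<in> carrier R" using r M_carr by blast
  have "phi (gr_class P Jgen n (up_ring.monom P r 0)) k d
      = GR.cl d (if d + k = n then up_ring.coeff P (up_ring.monom P r 0) k else \<zero>)"
    by (rule phi_class) (simp add: rc)
  also have "\<dots> = (if k = 0 then gr_class R m n r else \<zero>\<^bsub>G\<^esub>) d"
    unfolding G_class_eval GR.gr_zero
    using rc by (cases "k = 0") auto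
  also have "\<dots> = up_ring.monom UG (gr_class R m n r) 0 k d"
    by (simp only: UG_monom[OF G_class_carrier[OF r]])
  finally show "phi (gr_class P Jgen n (up_ring.monom P r 0)) k d = up_ring.monom UG (gr_class R m n r) 0 k d" .
qed

lemma phi_iso: "phi \<in> ring_iso GPr UG"
  unfolding ring_iso_def
proof (intro CollectI conjI)
  show "phi \<in> ring_hom GPr UG"
  proof (rule ring_hom_memI)
    show "\<And>x. x \<in> carrier GPr \<Longrightarrow> phi x \<in> carrier UG" by (rule phi_carrier)
    show "\<And>x y. x \<in> carrier GPr \<Longrightarrow> y \<in> carrier GPr \<Longrightarrow> phi (x \<otimes>\<^bsub>GPr\<^esub> y) = phi x \<otimes>\<^bsub>UG\<^esub> phi y"
      by (rule phi_mult)
    show "\<And>x y. x \<in> carrier GPr \<Longrightarrow> y \<in> carrier GPr \<Longrightarrow> phi (x \<oplus>\<^bsub>GPr\<^esub> y) = phi x \<oplus>\<^bsub>UG\<^esub> phi y"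
      by (rule phi_add)
    show "phi \<one>\<^bsub>GPr\<^esub> = \<one>\<^bsub>UG\<^esub>" by (rule phi_one)
  qed
  show "bij_betw phi (carrier GPr) (carrier UG)" by (rule phi_bij)
qed

end

theorem lemma2p4:
  fixes R :: "('a, 'b) ring_scheme" and m :: "'a set"
    and I :: "(nat \<Rightarrow> 'a) set" and Ik :: "nat \<Rightarrow> 'a set"
  assumes "noetherian_ring R" and "local_ring R m"
    and "\<And>k. ideal (Ik k) R"
    and "ideal I (UP R)"
    and "I = {p \<in> carrier (UP R). \<forall>k. coeff (UP R) p k \<in> Ik k}"
  shows "\<exists>\<phi>. \<phi> \<in> ring_iso
              (gr (UP R) (Idl\<^bsub>UP R\<^esub> (insert (monom (UP R) \<one>\<^bsub>R\<^esub> 1) ((\<lambda>r. monom (UP R) r 0) ` m))))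
              (UP (gr R m))
          \<and> \<phi> (gr_class (UP R) (Idl\<^bsub>UP R\<^esub> (insert (monom (UP R) \<one>\<^bsub>R\<^esub> 1) ((\<lambda>r. monom (UP R) r 0) ` m)))
                  1 (monom (UP R) \<one>\<^bsub>R\<^esub> 1))
             = monom (UP (gr R m)) \<one>\<^bsub>gr R m\<^esub> 1
          \<and> (\<forall>n. \<forall>r \<in> ideal_pow R m n.
               \<phi> (gr_class (UP R) (Idl\<^bsub>UP R\<^esub> (insert (monom (UP R) \<one>\<^bsub>R\<^esub> 1) ((\<lambda>r. monom (UP R) r 0) ` m)))
                    n (monom (UP R) r 0))
               = monom (UP (gr R m)) (gr_class R m n r) 0)
          \<and> \<phi> ` in_ideal (UP R) (Idl\<^bsub>UP R\<^esub> (insert (monom (UP R) \<one>\<^bsub>R\<^esub> 1) ((\<lambda>r. monom (UP R) r 0) ` m))) I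
             = {p \<in> carrier (UP (gr R m)). \<forall>k. coeff (UP (gr R m)) p k \<in> in_ideal R m (Ik k)}"
proof -
  have cr: "cring R" and mx: "maximalideal m R" using assms(2) unfolding local_ring_def by auto
  have mi: "ideal m R" using mx maximalideal.axioms(1) by blast
  interpret grctx R "UP R" m
    by (intro grctx.intro UP_cring.intro grctx_axioms.intro cr mi)
  show ?thesis
    using phi_iso phi_TT phi_const phi_in_ideal[OF assms(3) assms(5)] by blast
qed


end
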